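(* Let $H$ be an RB function for $\mathcal X_r$, $\eta\ge\max_{p\in\mathcal Q}H(\mathbf f[p])$, let $\epsilon,\epsilon'>0$, let $H_{\mathrm{thr}}\in\mathbb R$, and let $\mathcal V$ be a $1-\epsilon$ confidence region. Let $\lambda$ be the event consisting of all $(\vec a,\vec x)\in\mathcal A^n\times\mathcal X^n$ with $nH(\mathcal V(\vec a,\vec x,\epsilon))-\nu(\vec x)\eta\ge H_{\mathrm{thr}}$ (the abort outcome $\perp$ is not in $\lambda$). Then for every $n$-round device behavior $P_{A\mid X}$ and input distribution $\Pi$, the distribution $P_{AX}$ is $\epsilon$-close in total variation distance to a distribution $\tilde P_{AX}(\vec a,\vec x)=\tilde P(\vec a\mid\vec x)\Pi(\vec x)$ on $(\mathcal A^n\cup\{\perp\})\times\mathcal X^n$ such that, according to $\tilde P_{AX}$, either (i) $\Pr(\lambda)\le\epsilon'$, or (ii) $H_{\min}(A\mid X;\lambda)\ge H_{\mathrm{thr}}-\log_2\frac1{\epsilon'}$, where $H_{\min}(A\mid X;\lambda)=-\log_2\sum_{\vec x}\tilde P(\vec x\mid\lambda)\max_{\vec a}\tilde P(\vec a\mid\vec x;\lambda)$ (conditional probabilities computed from $\tilde P_{AX}$).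
   Context: Setting. A Bell device consists of $k$ boxes with finite input sets $\mathcal X_i$ and output sets $\mathcal A_i$; $\mathcal X=\prod_i\mathcal X_i$, $\mathcal A=\prod_i\mathcal A_i$. Single-round behaviors $p=(p(a\mid x))_{a,x}$; $\mathcal Q$ the set of quantum behaviors (realizable by a $k$-partite quantum state and local measurements). Bell expression $f$: $f[p]=\sum_{a,x}f(a,x)p(a\mid x)$; fixed $\mathbf f=(f_1,\dots,f_t)$, $\mathbf f[p]\in\mathbb R^t$, $\mathbf f[\mathcal Q]=\{\mathbf f[p]:p\in\mathcal Q\}$. $n$-round device behavior: $P(\vec a\mid\vec x)=\prod_{j=1}^np_{\vec a_{j-1},\vec x_{j-1}}(a_j\mid x_j)$ with each $p_{\vec a_{j-1},\vec x_{j-1}}\in\mathcal Q$, where $\vec a_j,\vec x_j$ are length-$j$ prefixes. Inputs drawn with $\Pi(\vec x)=\prod_j\pi(x_j)$ for a distribution $\pi$ on $\mathcal X$; $P_{AX}(\vec a,\vec x)=P(\vec a\mid\vec x)\Pi(\vec x)$. RB function for nonempty $\mathcal X_r\subseteq\mathcal X$: $H:\mathbf f[\mathcal Q]\to[0,\log_2|\mathcal A|]$ with (1) $\min_{a\in\mathcal A,x\in\mathcal X_r}(-\log_2p(a\mid x))\ge H(\mathbf f[p])$ for all $p\in\mathcal Q$; (2) $H(q\mathbf f[p_1]+(1-q)\mathbf f[p_2])\le qH(\mathbf f[p_1])+(1-q)H(\mathbf f[p_2])$ for $q\in[0,1]$, $p_1,p_2\in\mathcal Q$. For $\mathcal V\subseteq\mathbb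 R^t$, $H(\mathcal V)$ is a fixed number $\le\inf\{H(\mathbf y):\mathbf y\in\mathbf f[\mathcal Q]\cap\mathcal V\}$, and $0$ if the intersection is empty. $\nu(\vec x)=\#\{j:x_j\notin\mathcal X_r\}$. A $1-\epsilon$ confidence region is an assignment $(\vec a,\vec x)\mapsto\mathcal V(\vec a,\vec x,\epsilon)\subseteq\mathbb R^t$ such that for every $n$-round device behavior, $\Pr_{P_{AX}}[\frac1n\sum_{j=1}^n\mathbf f[p_{\vec a_{j-1},\vec x_{j-1}}]\in\mathcal V(\vec a,\vec x,\epsilon)]\ge1-\epsilon$. *)

theory Defs
  imports "HOL-Analysis.Analysis"
begin

text \<open>Global input set = UNIV of the finite type 'x, global output set = UNIV of the
finite type 'a. A single-round behavior p is a function p a x = p(a|x).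
Bell expressions f_1..f_t are bundled into F :: 'a => 'x => real^'t.\<close>

definition behaviors :: "('a::finite \<Rightarrow> 'x::finite \<Rightarrow> real) set" where
  "behaviors = {p. (\<forall>a x. 0 \<le> p a x) \<and> (\<forall>x. (\<Sum>a\<in>UNIV. p a x) = 1)}"

definition convex_behavior_set :: "('a::finite \<Rightarrow> 'x::finite \<Rightarrow> real) set \<Rightarrow> bool" where
  "convex_behavior_set Q \<longleftrightarrow>
     (\<forall>p1\<in>Q. \<forall>p2\<in>Q. \<forall>q\<in>{0..1::real}. (\<lambda>a x. q * p1 a x + (1 - q) * p2 a x) \<in> Q)"

definition bell_val :: "('a::finite \<Rightarrow> 'x::finite \<Rightarrow> real^'t) \<Rightarrow> ('a \<Rightarrow> 'x \<Rightarrow> real) \<Rightarrow> real^'t" where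
  "bell_val F p = (\<Sum>a\<in>UNIV. \<Sum>x\<in>UNIV. p a x *\<^sub>R F a x)"

text \<open>RB function for Xr. Condition (1): min over a and x in Xr of -log2 p(a|x) is at
least H(f[p]), with the convention -log2 0 = +infinity.\<close>
definition RB_function ::
  "('a::finite \<Rightarrow> 'x::finite \<Rightarrow> real) set \<Rightarrow> ('a \<Rightarrow> 'x \<Rightarrow> real^'t) \<Rightarrow> 'x set \<Rightarrow> (real^'t \<Rightarrow> real) \<Rightarrow> bool" where
  "RB_function Q F Xr H \<longleftrightarrow> Xr \<noteq> {} \<and>
     (\<forall>p\<in>Q. 0 \<le> H (bell_val F p) \<and> H (bell_val F p) \<le> log 2 (real CARD('a))) \<and>
     (\<forall>p\<in>Q. \<forall>a. \<forall>x\<in>Xr. p a x > 0 \<longrightarrow> H (bell_val F p) \<le> - log 2 (p a x)) \<and>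
     (\<forall>p1\<in>Q. \<forall>p2\<in>Q. \<forall>q\<in>{0..1::real}.
        H (q *\<^sub>R bell_val F p1 + (1 - q) *\<^sub>R bell_val F p2)
          \<le> q * H (bell_val F p1) + (1 - q) * H (bell_val F p2))"

definition set_extension ::
  "('a::finite \<Rightarrow> 'x::finite \<Rightarrow> real) set \<Rightarrow> ('a \<Rightarrow> 'x \<Rightarrow> real^'t) \<Rightarrow> (real^'t \<Rightarrow> real)
     \<Rightarrow> ((real^'t) set \<Rightarrow> real) \<Rightarrow> bool" where
  "set_extension Q F H HV \<longleftrightarrow>
     (\<forall>V. (\<forall>y \<in> bell_val F ` Q \<inter> V. HV V \<le> H y) \<and>
          (bell_val F ` Q \<inter> V = {} \<longrightarrow> HV V = 0))"

definition seqs :: "nat \<Rightarrow> 'b list set" where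
  "seqs n = {xs. length xs = n}"

definition nu :: "'x set \<Rightarrow> 'x list \<Rightarrow> nat" where
  "nu Xr xs = card {j. j < length xs \<and> xs ! j \<notin> Xr}"

definition is_distribution :: "('x::finite \<Rightarrow> real) \<Rightarrow> bool" where
  "is_distribution \<pi> \<longleftrightarrow> (\<forall>x. 0 \<le> \<pi> x) \<and> (\<Sum>x\<in>UNIV. \<pi> x) = 1"

text \<open>An n-round device behavior: D as xs is the behavior used in the round following
the prefixes as, xs (of equal length < n).\<close>
definition device_behavior ::
  "('a \<Rightarrow> 'x \<Rightarrow> real) set \<Rightarrow> nat \<Rightarrow> ('a list \<Rightarrow> 'x list \<Rightarrow> 'a \<Rightarrow> 'x \<Rightarrow> real) \<Rightarrow> bool" where
  "device_behavior Q n D \<longleftrightarrow>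
     (\<forall>as xs. length as = length xs \<and> length as < n \<longrightarrow> D as xs \<in> Q)"

definition dev_prob :: "('a list \<Rightarrow> 'x list \<Rightarrow> 'a \<Rightarrow> 'x \<Rightarrow> real) \<Rightarrow> nat \<Rightarrow> 'a list \<Rightarrow> 'x list \<Rightarrow> real" where
  "dev_prob D n as xs = (\<Prod>j<n. D (take j as) (take j xs) (as ! j) (xs ! j))"

definition input_prob :: "('x \<Rightarrow> real) \<Rightarrow> nat \<Rightarrow> 'x list \<Rightarrow> real" where
  "input_prob \<pi> n xs = (\<Prod>j<n. \<pi> (xs ! j))"

definition joint_prob ::
  "('a list \<Rightarrow> 'x list \<Rightarrow> 'a \<Rightarrow> 'x \<Rightarrow> real) \<Rightarrow> ('x \<Rightarrow> real) \<Rightarrow> nat \<Rightarrow> 'a list \<Rightarrow> 'x list \<Rightarrow> real" where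
  "joint_prob D \<pi> n as xs = dev_prob D n as xs * input_prob \<pi> n xs"

definition avg_bell ::
  "('a::finite \<Rightarrow> 'x::finite \<Rightarrow> real^'t) \<Rightarrow> ('a list \<Rightarrow> 'x list \<Rightarrow> 'a \<Rightarrow> 'x \<Rightarrow> real) \<Rightarrow> nat
     \<Rightarrow> 'a list \<Rightarrow> 'x list \<Rightarrow> real^'t" where
  "avg_bell F D n as xs = (1 / real n) *\<^sub>R (\<Sum>j<n. bell_val F (D (take j as) (take j xs)))"

definition confidence_region ::
  "('a::finite \<Rightarrow> 'x::finite \<Rightarrow> real) set \<Rightarrow> ('a \<Rightarrow> 'x \<Rightarrow> real^'t) \<Rightarrow> ('x \<Rightarrow> real) \<Rightarrow> nat
     \<Rightarrow> ('a list \<Rightarrow> 'x list \<Rightarrow> real \<Rightarrow> (real^'t) set) \<Rightarrow> real \<Rightarrow> bool" where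
  "confidence_region Q F \<pi> n V \<epsilon> \<longleftrightarrow>
     (\<forall>D. device_behavior Q n D \<longrightarrow>
        (\<Sum>as\<in>seqs n. \<Sum>xs\<in>seqs n.
           if avg_bell F D n as xs \<in> V as xs \<epsilon> then joint_prob D \<pi> n as xs else 0) \<ge> 1 - \<epsilon>)"

text \<open>Conditional distributions Pt(o|xs) on outcomes o in A^n union {bottom}
(None = abort outcome bottom), for each xs in X^n.\<close>
definition cond_dist_abort :: "nat \<Rightarrow> ('a::finite list option \<Rightarrow> 'x::finite list \<Rightarrow> real) \<Rightarrow> bool" where
  "cond_dist_abort n Pt \<longleftrightarrow>
     (\<forall>xs\<in>seqs n. (\<forall>oc. 0 \<le> Pt oc xs) \<and> (\<forall>as. length as \<noteq> n \<longrightarrow> Pt (Some as) xs = 0) \<and>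
        Pt None xs + (\<Sum>as\<in>seqs n. Pt (Some as) xs) = 1)"

text \<open>Total variation distance between P_AX (which gives the abort outcome probability 0)
and Pt_AX(o,xs) = Pt(o|xs) Pi(xs).\<close>
definition tv_dist ::
  "('a::finite list \<Rightarrow> 'x::finite list \<Rightarrow> real) \<Rightarrow> ('a list option \<Rightarrow> 'x list \<Rightarrow> real) \<Rightarrow> ('x \<Rightarrow> real)
     \<Rightarrow> nat \<Rightarrow> real" where
  "tv_dist P Pt \<pi> n = (1/2) * (\<Sum>xs\<in>seqs n.
       \<bar>Pt None xs * input_prob \<pi> n xs\<bar> +
       (\<Sum>as\<in>seqs n. \<bar>P as xs - Pt (Some as) xs * input_prob \<pi> n xs\<bar>))"

definition prob_event ::
  "('a::finite list option \<Rightarrow> 'x::finite list \<Rightarrow> real) \<Rightarrow> ('x \<Rightarrow> real) \<Rightarrow> nat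
     \<Rightarrow> ('a list \<times> 'x list) set \<Rightarrow> real" where
  "prob_event Pt \<pi> n lam = (\<Sum>xs\<in>seqs n. \<Sum>as\<in>seqs n.
       if (as, xs) \<in> lam then Pt (Some as) xs * input_prob \<pi> n xs else 0)"

definition prob_x_and_event ::
  "('a::finite list option \<Rightarrow> 'x::finite list \<Rightarrow> real) \<Rightarrow> ('x \<Rightarrow> real) \<Rightarrow> nat
     \<Rightarrow> ('a list \<times> 'x list) set \<Rightarrow> 'x list \<Rightarrow> real" where
  "prob_x_and_event Pt \<pi> n lam xs = (\<Sum>as\<in>seqs n.
       if (as, xs) \<in> lam then Pt (Some as) xs * input_prob \<pi> n xs else 0)"

definition prob_x_given_event where
  "prob_x_given_event Pt \<pi> n lam xs = prob_x_and_event Pt \<pi> n lam xs / prob_event Pt \<pi> n lam"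

definition prob_a_given_x_event where
  "prob_a_given_x_event Pt \<pi> n lam as xs =
     (if (as, xs) \<in> lam then Pt (Some as) xs * input_prob \<pi> n xs else 0)
       / prob_x_and_event Pt \<pi> n lam xs"

definition Hmin_cond ::
  "('a::finite list option \<Rightarrow> 'x::finite list \<Rightarrow> real) \<Rightarrow> ('x \<Rightarrow> real) \<Rightarrow> nat
     \<Rightarrow> ('a list \<times> 'x list) set \<Rightarrow> real" where
  "Hmin_cond Pt \<pi> n lam = - log 2 (\<Sum>xs\<in>seqs n.
       prob_x_given_event Pt \<pi> n lam xs *
         Max ((\<lambda>as. prob_a_given_x_event Pt \<pi> n lam as xs) ` seqs n))"

end

theory Submission
  imports Defs
begin

lemma finite_seqs: "finite (seqs n :: ('a::finite) list set)"
proof -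
  have "seqs n = {xs::'a list. set xs \<subseteq> UNIV \<and> length xs = n}" by (auto simp: seqs_def)
  thus ?thesis using finite_lists_length_eq[OF finite[of "UNIV::'a set"]] by simp
qed

lemma seqs_ne: "seqs n \<noteq> {}"
  by (auto simp: seqs_def intro!: exI[of _ "replicate n undefined"])

lemma seqs_Suc: "seqs (Suc n) = (\<lambda>(l,a). l @ [a]) ` (seqs n \<times> UNIV)"
proof
  show "seqs (Suc n) \<subseteq> (\<lambda>(l,a). l @ [a]) ` (seqs n \<times> UNIV)"
  proof
    fix xs assume "xs \<in> seqs (Suc n)"
    hence "length xs = Suc n" by (simp add: seqs_def)
    hence "xs = butlast xs @ [last xs]" "length (butlast xs) = n"
      by (auto intro: append_butlast_last_id[symmetric])
    thus "xs \<in> (\<lambda>(l,a). l @ [a]) ` (seqs n \<times> UNIV)"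
      by (auto simp: seqs_def image_iff intro!: exI[of _ "butlast xs"] exI[of _ "last xs"])
  qed
qed (auto simp: seqs_def)

lemma inj_snoc: "inj_on (\<lambda>(l,a). l @ [a]) X"
  by (auto simp: inj_on_def)

lemma sum_prod_seqs:
  fixes g :: "('a::finite) list \<Rightarrow> 'a \<Rightarrow> real"
  assumes "\<And>l. length l < n \<Longrightarrow> (\<Sum>a\<in>UNIV. g l a) = 1"
  shows "(\<Sum>as\<in>seqs n. \<Prod>j<n. g (take j as) (as ! j)) = 1"
  using assms
proof (induction n)
  case 0
  have "seqs 0 = {[]::'a list}" by (auto simp: seqs_def)
  thus ?case by simp
next
  case (Suc n)
  have IH: "(\<Sum>as\<in>seqs n. \<Prod>j<n. g (take j as) (as ! j)) = 1"
    using Suc.IH Suc.prems by simp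
  have step: "(\<Prod>j<Suc n. g (take j (l@[a])) ((l@[a]) ! j)) = (\<Prod>j<n. g (take j l) (l ! j)) * g l a"
    if "l \<in> seqs n" for l a
  proof -
    have ln: "length l = n" using that by (simp add: seqs_def)
    have "(\<Prod>j<n. g (take j (l@[a])) ((l@[a]) ! j)) = (\<Prod>j<n. g (take j l) (l ! j))"
      by (rule prod.cong) (auto simp: ln nth_append)
    thus ?thesis by (simp add: ln nth_append)
  qed
  have "(\<Sum>as\<in>seqs (Suc n). \<Prod>j<Suc n. g (take j as) (as ! j))
      = (\<Sum>(l,a)\<in>seqs n \<times> UNIV. \<Prod>j<Suc n. g (take j (l@[a])) ((l@[a]) ! j))"
    unfolding seqs_Suc by (subst sum.reindex[OF inj_snoc]) (simp add: case_prod_unfold)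
  also have "\<dots> = (\<Sum>l\<in>seqs n. \<Sum>a\<in>UNIV. \<Prod>j<Suc n. g (take j (l@[a])) ((l@[a]) ! j))"
    by (rule sum.cartesian_product[symmetric])
  also have "\<dots> = (\<Sum>l\<in>seqs n. (\<Prod>j<n. g (take j l) (l ! j)) * (\<Sum>a\<in>UNIV. g l a))"
    by (rule sum.cong[OF refl]) (simp only: step sum_distrib_left)
  also have "\<dots> = (\<Sum>l\<in>seqs n. (\<Prod>j<n. g (take j l) (l ! j)))"
    by (rule sum.cong) (auto simp: Suc.prems seqs_def)
  finally show ?case using IH by simp
qed


lemma bell_val_comb:
  "bell_val F (\<lambda>a x. q * p1 a x + r * p2 a x) = q *\<^sub>R bell_val F p1 + r *\<^sub>R bell_val F p2"
  by (simp add: bell_val_def scaleR_add_left sum.distrib scaleR_sum_right)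

lemma bell_val_mix:
  "bell_val F (\<lambda>a x. (\<Sum>j<k. ps j a x) / real k) = (1 / real k) *\<^sub>R (\<Sum>j<k. bell_val F (ps j))"
proof -
  have "bell_val F (\<lambda>a x. (\<Sum>j<k. ps j a x) / real k)
     = (\<Sum>a\<in>UNIV. \<Sum>x\<in>UNIV. (1 / real k) *\<^sub>R (\<Sum>j<k. ps j a x *\<^sub>R F a x))"
    unfolding bell_val_def
    by (intro sum.cong refl) (simp add: scaleR_sum_left[symmetric])
  also have "\<dots> = (1 / real k) *\<^sub>R (\<Sum>j<k. \<Sum>a\<in>UNIV. \<Sum>x\<in>UNIV. ps j a x *\<^sub>R F a x)"
    by (simp add: scaleR_sum_right sum.swap[of _ "{..<k}"])
  finally show ?thesis by (simp add: bell_val_def)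
qed

lemma jensen_mix:
  assumes conv: "convex_behavior_set Q"
    and Hc: "\<forall>p1\<in>Q. \<forall>p2\<in>Q. \<forall>q\<in>{0..1::real}.
        H (q *\<^sub>R bell_val F p1 + (1 - q) *\<^sub>R bell_val F p2)
          \<le> q * H (bell_val F p1) + (1 - q) * H (bell_val F p2)"
  shows "k > 0 \<Longrightarrow> (\<forall>j<k. ps j \<in> Q) \<Longrightarrow>
     (\<lambda>a x. (\<Sum>j<k. ps j a x) / real k) \<in> Q \<and>
     H (bell_val F (\<lambda>a x. (\<Sum>j<k. ps j a x) / real k)) \<le> (\<Sum>j<k. H (bell_val F (ps j))) / real k"
proof (induction k)
  case 0 thus ?case by simp
next
  case (Suc k)
  show ?case
  proof (cases "k = 0")
    case True
    thus ?thesis using Suc.prems by simp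
  next
    case False
    define m where "m = (\<lambda>a x. (\<Sum>j<k. ps j a x) / real k)"
    have IH: "m \<in> Q" "H (bell_val F m) \<le> (\<Sum>j<k. H (bell_val F (ps j))) / real k"
      using Suc.IH Suc.prems False unfolding m_def by auto
    define q where "q = real k / real (Suc k)"
    have q01: "q \<in> {0..1}" by (simp add: q_def)
    have pk: "ps k \<in> Q" using Suc.prems by simp
    have 1: "1 - q = 1 / real (Suc k)" by (simp add: q_def field_simps)
    have eqm: "(\<lambda>a x. (\<Sum>j<Suc k. ps j a x) / real (Suc k)) = (\<lambda>a x. q * m a x + (1 - q) * ps k a x)"
    proof (intro ext)
      fix a x
      have kp: "real k > 0" "real k + real k * real k > 0" using False by (auto simp: add_pos_nonneg)
      show "(\<Sum>j<Suc k. ps j a x) / real (Suc k) = q * m a x + (1 - q) * ps k a x"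
      proof -
        have e: "real k / real (Suc k) * ((\<Sum>j<k. ps j a x) / real k) = (\<Sum>j<k. ps j a x) / real (Suc k)"
          using kp by simp
        show ?thesis unfolding m_def 1 q_def e
          using 1[unfolded q_def] by (simp add: add_divide_distrib)
      qed
    qed
    have inQ: "(\<lambda>a x. q * m a x + (1 - q) * ps k a x) \<in> Q"
      using conv IH(1) pk q01 unfolding convex_behavior_set_def by blast
    have "H (bell_val F (\<lambda>a x. q * m a x + (1 - q) * ps k a x))
       = H (q *\<^sub>R bell_val F m + (1 - q) *\<^sub>R bell_val F (ps k))"
      by (simp add: bell_val_comb)
    also have "\<dots> \<le> q * H (bell_val F m) + (1 - q) * H (bell_val F (ps k))"
      using Hc IH(1) pk q01 by blast
    also have "\<dots> \<le> q * ((\<Sum>j<k. H (bell_val F (ps j))) / real k) + (1 - q) * H (bell_val F (ps k))"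
      using mult_left_mono[OF IH(2), of q] q01 by simp
    also have "\<dots> = (\<Sum>j<Suc k. H (bell_val F (ps j))) / real (Suc k)"
    proof -
      have e: "real k / real (Suc k) * ((\<Sum>j<k. H (bell_val F (ps j))) / real k) = (\<Sum>j<k. H (bell_val F (ps j))) / real (Suc k)"
        using False by simp
      show ?thesis unfolding 1 unfolding q_def e by (simp add: add_divide_distrib)
    qed
    finally show ?thesis using inQ eqm by simp
  qed
qed


lemma beh_le1:
  assumes "p \<in> behaviors" shows "0 \<le> p a x" "p a x \<le> 1"
proof -
  show "0 \<le> p a x" using assms by (simp add: behaviors_def)
  have "p a x \<le> (\<Sum>a\<in>UNIV. p a x)"
    by (rule member_le_sum) (use assms in \<open>auto simp: behaviors_def\<close>)
  thus "p a x \<le> 1" using assms by (simp add: behaviors_def)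
qed

lemma dev_bound:
  fixes Q :: "('a::finite \<Rightarrow> 'x::finite \<Rightarrow> real) set"
    and F :: "'a \<Rightarrow> 'x \<Rightarrow> real^'t"
  assumes Q_beh: "Q \<subseteq> behaviors"
    and Q_convex: "convex_behavior_set Q"
    and RB: "RB_function Q F Xr H"
    and HV: "set_extension Q F H HV"
    and eta: "\<forall>p\<in>Q. H (bell_val F p) \<le> \<eta>"
    and n: "n > 0"
    and dev: "device_behavior Q n D"
    and as: "as \<in> seqs n" and xs: "xs \<in> seqs n"
    and G: "avg_bell F D n as xs \<in> Vs"
    and L: "real n * HV Vs - real (nu Xr xs) * \<eta> \<ge> Hthr"
  shows "dev_prob D n as xs \<le> 2 powr (- Hthr)"
proof -
  have las: "length as = n" and lxs: "length xs = n" using as xs by (auto simp: seqs_def)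
  define ps where "ps j = D (take j as) (take j xs)" for j
  have psQ: "\<forall>j<n. ps j \<in> Q" using dev las lxs by (auto simp: ps_def device_behavior_def)
  define h where "h j = H (bell_val F (ps j))" for j
  define e where "e j = - h j + (if xs ! j \<notin> Xr then \<eta> else 0)" for j
  have fac: "ps j (as ! j) (xs ! j) \<le> 2 powr e j" if "j < n" for j
  proof -
    have pQ: "ps j \<in> Q" using psQ that by auto
    have pb: "ps j \<in> behaviors" using pQ Q_beh by auto
    let ?p = "ps j (as ! j) (xs ! j)"
    show ?thesis
    proof (cases "xs ! j \<in> Xr")
      case True
      show ?thesis
      proof (cases "?p > 0")
        case True2: True
        have "h j \<le> - log 2 ?p" using RB pQ True True2 by (auto simp: RB_function_def h_def)
        hence "2 powr (log 2 ?p) \<le> 2 powr (- h j)" by simp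
        thus ?thesis using True True2 by (simp add: e_def)
      next
        case False
        thus ?thesis using beh_le1[OF pb] by (smt (verit) powr_gt_zero)
      qed
    next
      case False
      have "h j \<le> \<eta>" using eta pQ by (simp add: h_def)
      hence "1 \<le> 2 powr e j" using False by (simp add: e_def ge_one_powr_ge_zero)
      thus ?thesis using beh_le1[OF pb] by (smt (verit))
    qed
  qed
  have "dev_prob D n as xs = (\<Prod>j<n. ps j (as ! j) (xs ! j))" by (simp add: dev_prob_def ps_def)
  also have "\<dots> \<le> (\<Prod>j<n. 2 powr e j)"
    by (rule prod_mono) (use fac psQ Q_beh beh_le1 in blast)
  also have "\<dots> = 2 powr (\<Sum>j<n. e j)" by (simp add: powr_sum)
  finally have d1: "dev_prob D n as xs \<le> 2 powr (\<Sum>j<n. e j)" .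
  have nu_eq: "(\<Sum>j<n. (if xs ! j \<notin> Xr then \<eta> else 0)) = real (nu Xr xs) * \<eta>"
  proof -
    have "(\<Sum>j<n. (if xs ! j \<notin> Xr then \<eta> else 0)) = (\<Sum>j\<in>{j\<in>{..<n}. xs ! j \<notin> Xr}. \<eta>)"
      by (rule sum.inter_filter[symmetric]) simp
    also have "{j\<in>{..<n}. xs ! j \<notin> Xr} = {j. j < length xs \<and> xs ! j \<notin> Xr}" using lxs by auto
    finally show ?thesis by (simp add: nu_def)
  qed
  have se: "(\<Sum>j<n. e j) = - (\<Sum>j<n. h j) + real (nu Xr xs) * \<eta>"
    unfolding e_def by (simp add: sum.distrib sum_subtractf nu_eq[symmetric])
  define m where "m = (\<lambda>a x. (\<Sum>j<n. ps j a x) / real n)"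
  have J: "m \<in> Q" "H (bell_val F m) \<le> (\<Sum>j<n. h j) / real n"
    using jensen_mix[OF Q_convex, of H F n ps] RB n psQ
    unfolding m_def h_def RB_function_def by auto
  have avg: "avg_bell F D n as xs = bell_val F m"
    unfolding m_def bell_val_mix avg_bell_def ps_def ..
  have "HV Vs \<le> H (bell_val F m)"
    using HV J(1) G avg unfolding set_extension_def by auto
  hence "real n * HV Vs \<le> (\<Sum>j<n. h j)"
  proof -
    have "real n * H (bell_val F m) \<le> (\<Sum>j<n. h j)" using J(2) n by (simp add: field_simps)
    moreover have "real n * HV Vs \<le> real n * H (bell_val F m)"
      using \<open>HV Vs \<le> H (bell_val F m)\<close> by (simp add: mult_left_mono)
    ultimately show ?thesis by linarith
  qed
  hence "(\<Sum>j<n. e j) \<le> - Hthr" using se L by linarith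
  hence "2 powr (\<Sum>j<n. e j) \<le> 2 powr (- Hthr)" by simp
  thus ?thesis using d1 by linarith
qed


theorem theorem1:
  fixes Q :: "('a::finite \<Rightarrow> 'x::finite \<Rightarrow> real) set"
    and F :: "'a \<Rightarrow> 'x \<Rightarrow> real^'t"
    and Xr :: "'x set"
    and H :: "real^'t \<Rightarrow> real"
    and HV :: "(real^'t) set \<Rightarrow> real"
    and \<eta> \<epsilon> \<epsilon>' Hthr :: real
    and n :: nat
    and \<pi> :: "'x \<Rightarrow> real"
    and V :: "'a list \<Rightarrow> 'x list \<Rightarrow> real \<Rightarrow> (real^'t) set"
    and D :: "'a list \<Rightarrow> 'x list \<Rightarrow> 'a \<Rightarrow> 'x \<Rightarrow> real"
  assumes Q_beh: "Q \<subseteq> behaviors"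
    and Q_convex: "convex_behavior_set Q"
    and RB: "RB_function Q F Xr H"
    and HV: "set_extension Q F H HV"
    and eta: "\<forall>p\<in>Q. H (bell_val F p) \<le> \<eta>"
    and eps: "\<epsilon> > 0" and eps': "\<epsilon>' > 0"
    and n: "n > 0"
    and pi: "is_distribution \<pi>"
    and CR: "confidence_region Q F \<pi> n V \<epsilon>"
    and dev: "device_behavior Q n D"
  shows "\<exists>Pt :: 'a list option \<Rightarrow> 'x list \<Rightarrow> real.
           cond_dist_abort n Pt \<and>
           tv_dist (joint_prob D \<pi> n) Pt \<pi> n \<le> \<epsilon> \<and>
           (let lam = {(as, xs). as \<in> seqs n \<and> xs \<in> seqs n \<and>
                         real n * HV (V as xs \<epsilon>) - real (nu Xr xs) * \<eta> \<ge> Hthr}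
            in prob_event Pt \<pi> n lam \<le> \<epsilon>' \<or>
               Hmin_cond Pt \<pi> n lam \<ge> Hthr - log 2 (1 / \<epsilon>'))"
proof -
  define G where "G as xs \<longleftrightarrow> avg_bell F D n as xs \<in> V as xs \<epsilon>" for as xs
  define dp where "dp = dev_prob D n"
  define ip where "ip = input_prob \<pi> n"
  define Pt :: "'a list option \<Rightarrow> 'x list \<Rightarrow> real" where
    "Pt oc xs = (case oc of None \<Rightarrow> 1 - (\<Sum>as\<in>seqs n. if G as xs then dp as xs else 0)
                 | Some as \<Rightarrow> if as \<in> seqs n \<and> G as xs then dp as xs else 0)" for oc xs
  have fin: "finite (seqs n :: 'a list set)" "finite (seqs n :: 'x list set)" by (rule finite_seqs)+
  have dp_nonneg: "0 \<le> dp as xs" if "as \<in> seqs n" "xs \<in> seqs n" for as xs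
  proof -
    have "D (take j as) (take j xs) \<in> behaviors" if "j < n" for j
      using dev Q_beh \<open>j < n\<close> \<open>as \<in> seqs n\<close> \<open>xs \<in> seqs n\<close>
      by (auto simp: device_behavior_def seqs_def)
    thus ?thesis unfolding dp_def dev_prob_def
      by (intro prod_nonneg) (auto simp: behaviors_def)
  qed
  have dp_sum: "(\<Sum>as\<in>seqs n. dp as xs) = 1" if xs: "xs \<in> seqs n" for xs
  proof -
    have lxs: "length xs = n" using xs by (simp add: seqs_def)
    define g where "g l a = D l (take (length l) xs) a (xs ! length l)" for l a
    have "(\<Sum>as\<in>seqs n. \<Prod>j<n. g (take j as) (as ! j)) = 1"
    proof (rule sum_prod_seqs)
      fix l :: "'a list" assume "length l < n"
      hence "D l (take (length l) xs) \<in> behaviors"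
        using dev Q_beh lxs by (auto simp: device_behavior_def)
      thus "(\<Sum>a\<in>UNIV. g l a) = 1" by (simp add: g_def behaviors_def)
    qed
    moreover have "(\<Sum>as\<in>seqs n. dp as xs) = (\<Sum>as\<in>seqs n. \<Prod>j<n. g (take j as) (as ! j))"
      by (intro sum.cong refl prod.cong) (auto simp: dp_def dev_prob_def g_def seqs_def)
    ultimately show ?thesis by simp
  qed
  have ip_nonneg: "0 \<le> ip xs" for xs
    using pi unfolding ip_def input_prob_def is_distribution_def by (simp add: prod_nonneg)
  have ip_sum: "(\<Sum>xs\<in>seqs n. ip xs) = 1"
    unfolding ip_def input_prob_def
    using sum_prod_seqs[of n "\<lambda>l x. \<pi> x"] pi by (simp add: is_distribution_def)
  have dpG_le: "(\<Sum>as\<in>seqs n. if G as xs then dp as xs else 0) \<le> 1" if "xs \<in> seqs n" for xs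
  proof -
    have "(\<Sum>as\<in>seqs n. if G as xs then dp as xs else 0) \<le> (\<Sum>as\<in>seqs n. dp as xs)"
      by (rule sum_mono) (use dp_nonneg that in auto)
    thus ?thesis using dp_sum that by simp
  qed
  have CD: "cond_dist_abort n Pt"
    unfolding cond_dist_abort_def
  proof (intro ballI conjI allI impI)
    fix xs :: "'x list" and oc assume xs: "xs \<in> seqs n"
    show "0 \<le> Pt oc xs"
      by (cases oc) (use dpG_le[OF xs] dp_nonneg xs in \<open>auto simp: Pt_def\<close>)
    fix as :: "'a list" assume "length as \<noteq> n"
    thus "Pt (Some as) xs = 0" by (simp add: Pt_def seqs_def)
  next
    fix xs :: "'x list" assume xs: "xs \<in> seqs n"
    have "(\<Sum>as\<in>seqs n. Pt (Some as) xs) = (\<Sum>as\<in>seqs n. if G as xs then dp as xs else 0)"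
      by (intro sum.cong refl) (simp add: Pt_def)
    thus "Pt None xs + (\<Sum>as\<in>seqs n. Pt (Some as) xs) = 1" by (simp add: Pt_def)
  qed
  have split: "(\<Sum>as\<in>seqs n. if G as xs then dp as xs * ip xs else 0)
             + (\<Sum>as\<in>seqs n. if G as xs then 0 else dp as xs * ip xs) = ip xs"
    if xs: "xs \<in> seqs n" for xs
  proof -
    have "(\<Sum>as\<in>seqs n. if G as xs then dp as xs * ip xs else 0)
             + (\<Sum>as\<in>seqs n. if G as xs then 0 else dp as xs * ip xs) = (\<Sum>as\<in>seqs n. dp as xs * ip xs)"
      by (subst sum.distrib[symmetric]) (intro sum.cong refl, simp)
    also have "\<dots> = ip xs" using dp_sum[OF xs] by (simp add: sum_distrib_right[symmetric])
    finally show ?thesis .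
  qed
  have per_x: "\<bar>Pt None xs * ip xs\<bar> + (\<Sum>as\<in>seqs n. \<bar>joint_prob D \<pi> n as xs - Pt (Some as) xs * ip xs\<bar>)
      = 2 * (\<Sum>as\<in>seqs n. if G as xs then 0 else dp as xs * ip xs)"
    if xs: "xs \<in> seqs n" for xs
  proof -
    have a: "(\<Sum>as\<in>seqs n. \<bar>joint_prob D \<pi> n as xs - Pt (Some as) xs * ip xs\<bar>)
        = (\<Sum>as\<in>seqs n. if G as xs then 0 else dp as xs * ip xs)"
      by (intro sum.cong refl) (use dp_nonneg xs ip_nonneg in \<open>auto simp: Pt_def joint_prob_def dp_def ip_def\<close>)
    have "Pt None xs * ip xs = ip xs - (\<Sum>as\<in>seqs n. if G as xs then dp as xs * ip xs else 0)"
    proof -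
      have c: "(\<Sum>as\<in>seqs n. if G as xs then dp as xs * ip xs else 0) = (\<Sum>as\<in>seqs n. if G as xs then dp as xs else 0) * ip xs"
        by (subst sum_distrib_right) (intro sum.cong refl, simp)
      show ?thesis unfolding c by (simp add: Pt_def algebra_simps)
    qed
    also have "\<dots> = (\<Sum>as\<in>seqs n. if G as xs then 0 else dp as xs * ip xs)"
      using split[OF xs] by simp
    finally have b: "Pt None xs * ip xs = (\<Sum>as\<in>seqs n. if G as xs then 0 else dp as xs * ip xs)" .
    have "0 \<le> (\<Sum>as\<in>seqs n. if G as xs then 0 else dp as xs * ip xs)"
      by (rule sum_nonneg) (use dp_nonneg xs ip_nonneg in auto)
    thus ?thesis using a b by simp
  qed
  have CRs: "(\<Sum>xs\<in>seqs n. \<Sum>as\<in>seqs n. if G as xs then dp as xs * ip xs else 0) \<ge> 1 - \<epsilon>"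
    using CR dev unfolding confidence_region_def G_def dp_def ip_def joint_prob_def
    by (subst sum.swap) blast
  have TV: "tv_dist (joint_prob D \<pi> n) Pt \<pi> n \<le> \<epsilon>"
  proof -
    have "tv_dist (joint_prob D \<pi> n) Pt \<pi> n
        = (\<Sum>xs\<in>seqs n. \<Sum>as\<in>seqs n. if G as xs then 0 else dp as xs * ip xs)"
      unfolding tv_dist_def ip_def[symmetric]
      by (simp add: per_x sum_distrib_left[symmetric] cong: sum.cong)
    also have "\<dots> = (\<Sum>xs\<in>seqs n. ip xs - (\<Sum>as\<in>seqs n. if G as xs then dp as xs * ip xs else 0))"
      by (intro sum.cong refl) (use split in force)
    also have "\<dots> = 1 - (\<Sum>xs\<in>seqs n. \<Sum>as\<in>seqs n. if G as xs then dp as xs * ip xs else 0)"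
      by (simp add: sum_subtractf ip_sum)
    finally show ?thesis using CRs by linarith
  qed
  define lam where "lam = {(as, xs). as \<in> seqs n \<and> xs \<in> seqs n \<and>
                         real n * HV (V as xs \<epsilon>) - real (nu Xr xs) * \<eta> \<ge> Hthr}"
  define c where "c = (2::real) powr (- Hthr)"
  have cpos: "c > 0" by (simp add: c_def)
  define w where "w as xs = (if (as, xs) \<in> lam then Pt (Some as) xs * ip xs else 0)" for as xs
  have w_nonneg: "0 \<le> w as xs" for as xs
    using dp_nonneg ip_nonneg by (auto simp: w_def lam_def Pt_def)
  have w_le: "w as xs \<le> c * ip xs" for as xs
  proof (cases "(as, xs) \<in> lam \<and> G as xs")
    case True
    hence as: "as \<in> seqs n" and xs: "xs \<in> seqs n" and Gx: "G as xs"
      and L: "real n * HV (V as xs \<epsilon>) - real (nu Xr xs) * \<eta> \<ge> Hthr"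
      by (auto simp: lam_def)
    have "dp as xs \<le> c"
      unfolding dp_def c_def
      by (rule dev_bound[OF Q_beh Q_convex RB HV eta n dev as xs _ L]) (use Gx in \<open>simp add: G_def\<close>)
    hence "dp as xs * ip xs \<le> c * ip xs" using ip_nonneg by (simp add: mult_right_mono)
    thus ?thesis using True as by (simp add: w_def Pt_def)
  next
    case False
    hence "w as xs = 0" by (auto simp: w_def Pt_def)
    thus ?thesis using cpos ip_nonneg by simp
  qed
  define Px where "Px xs = (\<Sum>as\<in>seqs n. w as xs)" for xs
  define PL where "PL = (\<Sum>xs\<in>seqs n. Px xs)"
  have Px_nonneg: "0 \<le> Px xs" for xs unfolding Px_def by (rule sum_nonneg) (use w_nonneg in auto)
  have PE: "prob_event Pt \<pi> n lam = PL"
    unfolding PL_def Px_def w_def prob_event_def ip_def ..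
  have PXE: "prob_x_and_event Pt \<pi> n lam xs = Px xs" for xs
    unfolding Px_def w_def prob_x_and_event_def ip_def ..
  have HM: "Hmin_cond Pt \<pi> n lam = - log 2 (\<Sum>xs\<in>seqs n. Px xs / PL * Max ((\<lambda>as. w as xs / Px xs) ` seqs n))"
    unfolding Hmin_cond_def prob_x_given_event_def prob_a_given_x_event_def PE PXE
    unfolding w_def ip_def ..
  have "PL \<le> \<epsilon>' \<or> Hmin_cond Pt \<pi> n lam \<ge> Hthr - log 2 (1 / \<epsilon>')"
  proof (cases "PL \<le> \<epsilon>'")
    case True thus ?thesis by simp
  next
    case False
    hence PLgt: "PL > \<epsilon>'" by simp
    hence PLpos: "PL > 0" using eps' by simp
    have ne: "seqs n \<noteq> {}" by (rule seqs_ne)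
    define S where "S = (\<Sum>xs\<in>seqs n. Px xs / PL * Max ((\<lambda>as. w as xs / Px xs) ` seqs n))"
    have Mx_nonneg: "0 \<le> Max ((\<lambda>as. w as xs / Px xs) ` seqs n)" for xs
    proof -
      obtain a0 :: "'a list" where "a0 \<in> seqs n" using ne by blast
      hence "w a0 xs / Px xs \<le> Max ((\<lambda>as. w as xs / Px xs) ` seqs n)"
        using fin by (intro Max_ge) auto
      moreover have "0 \<le> w a0 xs / Px xs" using w_nonneg Px_nonneg by simp
      ultimately show ?thesis by linarith
    qed
    have term_le: "Px xs / PL * Max ((\<lambda>as. w as xs / Px xs) ` seqs n) \<le> c * ip xs / PL" for xs
    proof (cases "Px xs = 0")
      case True thus ?thesis using cpos ip_nonneg PLpos by simp
    next
      case False
      hence Pxp: "Px xs > 0" using Px_nonneg[of xs] by simp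
      have "Max ((\<lambda>as. w as xs / Px xs) ` seqs n) \<le> c * ip xs / Px xs"
        using fin(1) ne w_le Pxp by (subst Max_le_iff) (auto intro: divide_right_mono)
      hence "Px xs / PL * Max ((\<lambda>as. w as xs / Px xs) ` seqs n) \<le> Px xs / PL * (c * ip xs / Px xs)"
        using Pxp PLpos by (intro mult_left_mono) auto
      thus ?thesis using Pxp by simp
    qed
    have "S \<le> (\<Sum>xs\<in>seqs n. c * ip xs / PL)"
      unfolding S_def by (rule sum_mono) (rule term_le)
    also have "\<dots> = c / PL" using ip_sum by (simp add: sum_divide_distrib[symmetric] sum_distrib_left[symmetric])
    also have "\<dots> \<le> c / \<epsilon>'" using PLgt eps' cpos by (simp add: frac_le)
    finally have Sle: "S \<le> c / \<epsilon>'" .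
    have Spos: "S > 0"
    proof -
      obtain x0 where x0: "x0 \<in> seqs n" "Px x0 > 0"
      proof (rule ccontr)
        assume "\<not> thesis"
        hence "\<forall>x\<in>seqs n. Px x \<le> 0" using that by force
        hence "PL \<le> 0" unfolding PL_def by (simp add: sum_nonpos)
        thus False using PLpos by simp
      qed
      obtain a0 where a0: "a0 \<in> seqs n" "w a0 x0 > 0"
      proof (rule ccontr)
        assume "\<not> thesis"
        hence "\<forall>a\<in>seqs n. w a x0 \<le> 0" using that by force
        hence "Px x0 \<le> 0" unfolding Px_def by (simp add: sum_nonpos)
        thus False using x0 by simp
      qed
      have "w a0 x0 / Px x0 \<le> Max ((\<lambda>as. w as x0 / Px x0) ` seqs n)"
        using fin a0 by (intro Max_ge) auto
      moreover have "0 < w a0 x0 / Px x0" using a0 x0 by simp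
      ultimately have "0 < Px x0 / PL * Max ((\<lambda>as. w as x0 / Px x0) ` seqs n)"
        using x0 PLpos by simp
      thus ?thesis unfolding S_def
        by (rule sum_pos2[OF fin(2) x0(1)]) (use Px_nonneg PLpos Mx_nonneg in simp)
    qed
    have "log 2 S \<le> log 2 (c / \<epsilon>')" using Spos Sle by simp
    also have "log 2 (c / \<epsilon>') = - Hthr - log 2 \<epsilon>'"
      using eps' by (simp add: c_def log_divide)
    finally have "- log 2 S \<ge> Hthr + log 2 \<epsilon>'" by simp
    moreover have "log 2 (1 / \<epsilon>') = - log 2 \<epsilon>'" using eps' by (simp add: log_divide)
    ultimately show ?thesis using HM S_def by simp
  qed
  thus ?thesis
    unfolding Let_def lam_def[symmetric] PE[symmetric] using CD TV by blast
qed

end
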